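(* Let $\mathcal N$ be an irreducible SDAN. Then every agent of $A$ is a party of every atom of $\mathcal N$, and for every atom $n\neq n_f$ and every outcome $r\in R_n$ there is an atom $n'$ such that $\mathcal X(n,a,r)=\{n'\}$ for every agent $a\in A$.
   Context: Fix a finite nonempty set $A$ of agents; each $a\in A$ has a nonempty set $Q_a$ of internal states, $Q_A=\prod_{a\in A}Q_a$. A transformer is a left-total relation on $Q_A$; for $S\subseteq A$ an $S$-transformer is one with $(q,q')\in\tau\Rightarrow q_a=q'_a$ for all $a\notin S$. An atom is $n=(P_n,R_n,\delta_n)$: $P_n\subseteq A$ nonempty (parties), $R_n$ finite nonempty (outcomes), $\delta_n$ assigns to each $r\in R_n$ a $P_n$-transformer $\langle n,r\rangle$. A negotiation is $\mathcal N=(N,n_0,n_f,\mathcal X)$ with $N$ a finite set of atoms, $n_0,n_f\in N$ (possibly equal), $T(N)=\{(n,a,r): n\in N,a\in P_n,r\in R_n\}$, $\mathcal X:T(N)\to 2^N$, such that every agent is a party of $n_0$ and of $n_f$, and $\mathcal X(n,a,r)=\emptyset$ iff $n=n_f$. Its graph has vertices $N$ and edges $(n,n')$ whenever $n'\in\mathcal X(n,a,r)$ for some $(n,a,r)$; $\mathcal N$ is acyclic if the graph has no cycle. A marking is $x:A\to 2^N$; initial $x_0(a)=\{n_0\}$, final $x_f(a)=\emptyset$. $x$ enables $n$ if $n\in x(a)$ for all $a\in P_n$; then for $r\in R_n$ the step $(n,r)$ leads to $x'$ with $x'(a)=\mathcal X(n,a,r)$ for $a\in P_n$, $x'(a)=x(a)$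 otherwise. A large step is a finite occurrence sequence from $x_0$ to $x_f$. $\mathcal N$ is sound if every atom is enabled at some reachable marking and every occurrence sequence from $x_0$ is a large step or can be extended to one. An agent $a$ is deterministic if for each $(n,a,r)\in T(N)$ with $n\ne n_f$, $\mathcal X(n,a,r)$ is a singleton; $\mathcal N$ is deterministic if all agents are deterministic. An SDAN is a sound, deterministic, acyclic negotiation. Merge rule. Guard: some atom $n$ has distinct outcomes $r_1,r_2$ with $\mathcal X(n,a,r_1)=\mathcal X(n,a,r_2)$ for all $a\in P_n$. Action: replace $r_1,r_2$ in $R_n$ by a fresh outcome $r_f$ with $\mathcal X(n,a,r_f)=\mathcal X(n,a,r_1)$ for $a\in P_n$ and $\langle n,r_f\rangle=\langle n,r_1\rangle\cup\langle n,r_2\rangle$. $(n,r)$ unconditionally enables $n'$ if $P_n\supseteq P_{n'}$ and $\mathcal X(n,a,r)=\{n'\}$ for all $a\in P_{n'}$. d-shortcut rule. Guard: atoms $n\neq n'$ and $r\in R_n$ such that $(n,r)$ unconditionally enables $n'$; $n'$ has at most one outcome; and if $n'\in\mathcal X(\tilde n,\tilde a,\tilde r)$ for at least one $(\tilde n,\tilde a,\tilde r)\in T(N)$ with $\tilde n\neq n$, then $\{n'\}=\mathcal X(\tilde n,\tilde a,\tilde r)$ for some $(\tilde n,\tilde a,\tilde r)\in T(N)$ with $\tilde n\ne n$. Action: (1) replace $R_n$ by $(R_n\setminus\{r\})\cup\{r'_f:r'\in R_{n'}\}$ with fresh names; (2) for $a\in P_{n'}$ set $\mathcal X(n,a,r'_f)=\mathcal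 X(n',a,r')$, for $a\in P_n\setminus P_{n'}$ set $\mathcal X(n,a,r'_f)=\mathcal X(n,a,r)$; (3) $\langle n,r'_f\rangle=\langle n,r\rangle\langle n',r'\rangle$ (relational composition); (4) if afterwards $n'\notin\mathcal X(\tilde n,\tilde a,\tilde r)$ for all $(\tilde n,\tilde a,\tilde r)\in T(N)$, remove $n'$. An SDAN is irreducible if neither the merge rule nor the d-shortcut rule can be applied to it. *)

theory Defs
  imports "HOL-Library.FuncSet"
begin

text \<open>A negotiation over agents of type 'a, local states of type 's, atoms of type 'n and
outcomes of type 'r. Global states Q_A are the extensional functions in Pi_E A Q.\<close>

record ('a, 's, 'n, 'r) negotiation =
  agents   :: "'a set"
  states   :: "'a \<Rightarrow> 's set"
  atoms    :: "'n set"
  init     :: "'n"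
  fin      :: "'n"
  parties  :: "'n \<Rightarrow> 'a set"
  outcomes :: "'n \<Rightarrow> 'r set"
  trf      :: "'n \<Rightarrow> 'r \<Rightarrow> (('a \<Rightarrow> 's) \<times> ('a \<Rightarrow> 's)) set"
  succ     :: "'n \<Rightarrow> 'a \<Rightarrow> 'r \<Rightarrow> 'n set"

definition gstates :: "('a, 's, 'n, 'r) negotiation \<Rightarrow> ('a \<Rightarrow> 's) set" where
  "gstates \<N> = PiE (agents \<N>) (states \<N>)"

definition is_transformer :: "('a, 's, 'n, 'r) negotiation \<Rightarrow> 'a set \<Rightarrow> (('a \<Rightarrow> 's) \<times> ('a \<Rightarrow> 's)) set \<Rightarrow> bool" where
  "is_transformer \<N> S \<tau> \<longleftrightarrow>
     \<tau> \<subseteq> gstates \<N> \<times> gstates \<N> \<and>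
     (\<forall>q\<in>gstates \<N>. \<exists>q'. (q, q') \<in> \<tau>) \<and>
     (\<forall>(q, q')\<in>\<tau>. \<forall>a\<in>agents \<N> - S. q a = q' a)"

definition Tset :: "('a, 's, 'n, 'r) negotiation \<Rightarrow> ('n \<times> 'a \<times> 'r) set" where
  "Tset \<N> = {(n, a, r). n \<in> atoms \<N> \<and> a \<in> parties \<N> n \<and> r \<in> outcomes \<N> n}"

definition wf_negotiation :: "('a, 's, 'n, 'r) negotiation \<Rightarrow> bool" where
  "wf_negotiation \<N> \<longleftrightarrow>
     finite (agents \<N>) \<and> agents \<N> \<noteq> {} \<and>
     (\<forall>a\<in>agents \<N>. states \<N> a \<noteq> {}) \<and>
     finite (atoms \<N>) \<and> init \<N> \<in> atoms \<N> \<and> fin \<N> \<in> atoms \<N> \<and>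
     (\<forall>n\<in>atoms \<N>. parties \<N> n \<noteq> {} \<and> parties \<N> n \<subseteq> agents \<N> \<and>
        finite (outcomes \<N> n) \<and> outcomes \<N> n \<noteq> {} \<and>
        (\<forall>r\<in>outcomes \<N> n. is_transformer \<N> (parties \<N> n) (trf \<N> n r))) \<and>
     agents \<N> \<subseteq> parties \<N> (init \<N>) \<and> agents \<N> \<subseteq> parties \<N> (fin \<N>) \<and>
     (\<forall>(n, a, r)\<in>Tset \<N>. succ \<N> n a r \<subseteq> atoms \<N> \<and>
        (succ \<N> n a r = {} \<longleftrightarrow> n = fin \<N>))"

definition graph :: "('a, 's, 'n, 'r) negotiation \<Rightarrow> ('n \<times> 'n) set" where
  "graph \<N> = {(n, n'). \<exists>a r. (n, a, r) \<in> Tset \<N> \<and> n' \<in> succ \<N> n a r}"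

definition is_acyclic :: "('a, 's, 'n, 'r) negotiation \<Rightarrow> bool" where
  "is_acyclic \<N> \<longleftrightarrow> acyclic (graph \<N>)"

text \<open>Markings. Agents outside A carry the empty set throughout.\<close>

definition init_marking :: "('a, 's, 'n, 'r) negotiation \<Rightarrow> 'a \<Rightarrow> 'n set" where
  "init_marking \<N> = (\<lambda>a. if a \<in> agents \<N> then {init \<N>} else {})"

definition fin_marking :: "'a \<Rightarrow> 'n set" where
  "fin_marking = (\<lambda>a. {})"

definition enables :: "('a, 's, 'n, 'r) negotiation \<Rightarrow> ('a \<Rightarrow> 'n set) \<Rightarrow> 'n \<Rightarrow> bool" where
  "enables \<N> x n \<longleftrightarrow> n \<in> atoms \<N> \<and> (\<forall>a\<in>parties \<N> n. n \<in> x a)"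

definition step :: "('a, 's, 'n, 'r) negotiation \<Rightarrow> ('a \<Rightarrow> 'n set) \<Rightarrow> 'n \<Rightarrow> 'r \<Rightarrow> ('a \<Rightarrow> 'n set) \<Rightarrow> bool" where
  "step \<N> x n r x' \<longleftrightarrow> enables \<N> x n \<and> r \<in> outcomes \<N> n \<and>
     x' = (\<lambda>a. if a \<in> parties \<N> n then succ \<N> n a r else x a)"

definition step_rel :: "('a, 's, 'n, 'r) negotiation \<Rightarrow> ('a \<Rightarrow> 'n set) \<Rightarrow> ('a \<Rightarrow> 'n set) \<Rightarrow> bool" where
  "step_rel \<N> x x' \<longleftrightarrow> (\<exists>n r. step \<N> x n r x')"

definition reach :: "('a, 's, 'n, 'r) negotiation \<Rightarrow> ('a \<Rightarrow> 'n set) \<Rightarrow> ('a \<Rightarrow> 'n set) \<Rightarrow> bool" where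
  "reach \<N> = (step_rel \<N>)\<^sup>*\<^sup>*"

definition sound :: "('a, 's, 'n, 'r) negotiation \<Rightarrow> bool" where
  "sound \<N> \<longleftrightarrow>
     (\<forall>n\<in>atoms \<N>. \<exists>x. reach \<N> (init_marking \<N>) x \<and> enables \<N> x n) \<and>
     (\<forall>x. reach \<N> (init_marking \<N>) x \<longrightarrow> reach \<N> x fin_marking)"

definition deterministic :: "('a, 's, 'n, 'r) negotiation \<Rightarrow> bool" where
  "deterministic \<N> \<longleftrightarrow>
     (\<forall>(n, a, r)\<in>Tset \<N>. n \<noteq> fin \<N> \<longrightarrow> (\<exists>n'. succ \<N> n a r = {n'}))"

definition SDAN :: "('a, 's, 'n, 'r) negotiation \<Rightarrow> bool" where
  "SDAN \<N> \<longleftrightarrow> wf_negotiation \<N> \<and> sound \<N> \<and> deterministic \<N> \<and> is_acyclic \<N>"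

definition merge_applicable :: "('a, 's, 'n, 'r) negotiation \<Rightarrow> bool" where
  "merge_applicable \<N> \<longleftrightarrow>
     (\<exists>n\<in>atoms \<N>. \<exists>r1\<in>outcomes \<N> n. \<exists>r2\<in>outcomes \<N> n. r1 \<noteq> r2 \<and>
        (\<forall>a\<in>parties \<N> n. succ \<N> n a r1 = succ \<N> n a r2))"

definition uncond_enables :: "('a, 's, 'n, 'r) negotiation \<Rightarrow> 'n \<Rightarrow> 'r \<Rightarrow> 'n \<Rightarrow> bool" where
  "uncond_enables \<N> n r n' \<longleftrightarrow>
     parties \<N> n' \<subseteq> parties \<N> n \<and> (\<forall>a\<in>parties \<N> n'. succ \<N> n a r = {n'})"

definition dshortcut_applicable :: "('a, 's, 'n, 'r) negotiation \<Rightarrow> bool" where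
  "dshortcut_applicable \<N> \<longleftrightarrow>
     (\<exists>n\<in>atoms \<N>. \<exists>n'\<in>atoms \<N>. \<exists>r\<in>outcomes \<N> n.
        n \<noteq> n' \<and> uncond_enables \<N> n r n' \<and> card (outcomes \<N> n') \<le> 1 \<and>
        ((\<exists>(n1, a1, r1)\<in>Tset \<N>. n1 \<noteq> n \<and> n' \<in> succ \<N> n1 a1 r1) \<longrightarrow>
         (\<exists>(n1, a1, r1)\<in>Tset \<N>. n1 \<noteq> n \<and> succ \<N> n1 a1 r1 = {n'})))"

definition irreducible :: "('a, 's, 'n, 'r) negotiation \<Rightarrow> bool" where
  "irreducible \<N> \<longleftrightarrow> \<not> merge_applicable \<N> \<and> \<not> dshortcut_applicable \<N>"

end

theory Submission
  imports Defs
begin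

context
  fixes N :: "('a, 's, 'n, 'r) negotiation"
  assumes sdan: "SDAN N"
begin

lemma wfN: "wf_negotiation N" using sdan by (simp add: SDAN_def)
lemma soundN: "sound N" using sdan by (simp add: SDAN_def)
lemma detN: "deterministic N" using sdan by (simp add: SDAN_def)
lemma acycN: "acyclic (graph N)" using sdan by (simp add: SDAN_def is_acyclic_def)

lemma fin_agents: "finite (agents N)" using wfN by (simp add: wf_negotiation_def)
lemma agents_ne: "agents N \<noteq> {}" using wfN by (simp add: wf_negotiation_def)
lemma fin_atoms: "finite (atoms N)" using wfN by (simp add: wf_negotiation_def)
lemma init_atom: "init N \<in> atoms N" using wfN by (simp add: wf_negotiation_def)
lemma fin_atom: "fin N \<in> atoms N" using wfN by (simp add: wf_negotiation_def)
lemma parties_ne: "n \<in> atoms N \<Longrightarrow> parties N n \<noteq> {}" using wfN by (simp add: wf_negotiation_def)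
lemma parties_sub: "n \<in> atoms N \<Longrightarrow> parties N n \<subseteq> agents N" using wfN by (simp add: wf_negotiation_def)
lemma outcomes_fin: "n \<in> atoms N \<Longrightarrow> finite (outcomes N n)" using wfN by (simp add: wf_negotiation_def)
lemma outcomes_ne: "n \<in> atoms N \<Longrightarrow> outcomes N n \<noteq> {}" using wfN by (simp add: wf_negotiation_def)
lemma init_parties: "agents N \<subseteq> parties N (init N)" using wfN by (simp add: wf_negotiation_def)
lemma fin_parties: "agents N \<subseteq> parties N (fin N)" using wfN by (simp add: wf_negotiation_def)

lemma Tset_wf: "\<forall>(n, a, r)\<in>Tset N. succ N n a r \<subseteq> atoms N \<and> (succ N n a r = {} \<longleftrightarrow> n = fin N)"
  using wfN unfolding wf_negotiation_def by (elim conjE) assumption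
lemma TsetI: "n \<in> atoms N \<Longrightarrow> a \<in> parties N n \<Longrightarrow> r \<in> outcomes N n \<Longrightarrow> (n, a, r) \<in> Tset N"
  by (simp add: Tset_def)
lemma succ_atoms: "n \<in> atoms N \<Longrightarrow> a \<in> parties N n \<Longrightarrow> r \<in> outcomes N n \<Longrightarrow> succ N n a r \<subseteq> atoms N"
  using Tset_wf TsetI by fastforce
lemma succ_empty: "n \<in> atoms N \<Longrightarrow> a \<in> parties N n \<Longrightarrow> r \<in> outcomes N n \<Longrightarrow> succ N n a r = {} \<longleftrightarrow> n = fin N"
  using Tset_wf TsetI by fastforce
lemma succ_det: "n \<in> atoms N \<Longrightarrow> a \<in> parties N n \<Longrightarrow> r \<in> outcomes N n \<Longrightarrow> n \<noteq> fin N \<Longrightarrow> \<exists>n'. succ N n a r = {n'}"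
  using detN TsetI unfolding deterministic_def by fastforce
lemma graphI: "n \<in> atoms N \<Longrightarrow> a \<in> parties N n \<Longrightarrow> r \<in> outcomes N n \<Longrightarrow> n' \<in> succ N n a r \<Longrightarrow> (n, n') \<in> graph N"
  unfolding graph_def Tset_def by blast
lemma graph_sub: "graph N \<subseteq> atoms N \<times> atoms N"
proof
  fix p assume "p \<in> graph N"
  then obtain n n' a r where "p = (n, n')" "n \<in> atoms N" "a \<in> parties N n" "r \<in> outcomes N n" "n' \<in> succ N n a r"
    unfolding graph_def Tset_def by blast
  then show "p \<in> atoms N \<times> atoms N" using succ_atoms by blast
qed
lemma graph_finite: "finite (graph N)"
  using graph_sub fin_atoms finite_subset by blast

lemma succ_cases: "n \<in> atoms N \<Longrightarrow> a \<in> parties N n \<Longrightarrow> r \<in> outcomes N n \<Longrightarrow>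
   succ N n a r = {} \<or> (\<exists>q. succ N n a r = {q} \<and> q \<in> atoms N \<and> (n, q) \<in> graph N)"
proof -
  assume h: "n \<in> atoms N" "a \<in> parties N n" "r \<in> outcomes N n"
  show ?thesis
  proof (cases "n = fin N")
    case True then show ?thesis using succ_empty[OF h] by simp
  next
    case False
    then obtain q where q: "succ N n a r = {q}" using succ_det[OF h] by blast
    then show ?thesis using succ_atoms[OF h] graphI[OF h, of q] by auto
  qed
qed

lemma no_self: "(n, n) \<notin> (graph N)\<^sup>+" using acycN unfolding acyclic_def by blast

lemma step_D: "step N x n r x' \<Longrightarrow> enables N x n \<and> r \<in> outcomes N n \<and> x' = (\<lambda>a. if a \<in> parties N n then succ N n a r else x a)"
  unfolding step_def by blast

abbreviation x0 where "x0 \<equiv> init_marking N"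
abbreviation R where "R \<equiv> reach N"

lemma reach_ok: "R x0 x \<Longrightarrow> (a \<notin> agents N \<longrightarrow> x a = {}) \<and> (x a = {} \<or> (\<exists>m\<in>atoms N. x a = {m}))"
  unfolding reach_def
proof (induction rule: rtranclp_induct)
  case base
  then show ?case using init_atom by (auto simp: init_marking_def)
next
  case (step y z)
  then obtain n r where st: "step N y n r z" unfolding step_rel_def by blast
  note D = step_D[OF st]
  have nA: "n \<in> atoms N" using D by (simp add: enables_def)
  show ?case
  proof (cases "a \<in> parties N n")
    case True
    then have "a \<in> agents N" using parties_sub[OF nA] by blast
    moreover have "z a = succ N n a r" using D True by simp
    ultimately show ?thesis using succ_cases[OF nA True, of r] D by auto
  next
    case False
    then show ?thesis using D step.IH by simp
  qed
qed

lemma enabled_single: "R x0 x \<Longrightarrow> enables N x n \<Longrightarrow> a \<in> parties N n \<Longrightarrow> x a = {n}"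
  using reach_ok[of x a] unfolding enables_def by auto

lemma reach_trans: "R x y \<Longrightarrow> R y z \<Longrightarrow> R x z" unfolding reach_def by simp

lemma reach_step: "step N x n r y \<Longrightarrow> R x y" unfolding reach_def step_rel_def by blast

lemma leave_gen: "(step_rel N)\<^sup>*\<^sup>* y fin_marking \<Longrightarrow> y a = {g} \<Longrightarrow>
   \<exists>z n r z'. R y z \<and> step N z n r z' \<and> a \<in> parties N n \<and> z a = {g}"
proof (induction rule: converse_rtranclp_induct)
  case base
  then show ?case by (simp add: fin_marking_def)
next
  case (step y y2)
  then obtain n r where st: "step N y n r y2" unfolding step_rel_def by blast
  note D = step_D[OF st]
  show ?case
  proof (cases "a \<in> parties N n")
    case True
    then show ?thesis using st step.prems unfolding reach_def by blast
  next
    case False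
    then have "y2 a = {g}" using D step.prems by simp
    then obtain z n' r' z' where "R y2 z" "step N z n' r' z'" "a \<in> parties N n'" "z a = {g}"
      using step.IH by blast
    moreover have "R y z" using \<open>R y2 z\<close> step.hyps(1) unfolding reach_def by simp
    ultimately show ?thesis by blast
  qed
qed

lemma leave: "R x0 y \<Longrightarrow> y a = {g} \<Longrightarrow>
   \<exists>z r z'. R y z \<and> step N z g r z' \<and> a \<in> parties N g \<and> z a = {g}"
proof -
  assume h: "R x0 y" "y a = {g}"
  have "R y fin_marking" using soundN h(1) unfolding sound_def by blast
  then obtain z n r z' where z: "R y z" "step N z n r z'" "a \<in> parties N n" "z a = {g}"
    using leave_gen h(2) unfolding reach_def by blast
  have "n \<in> z a" using step_D[OF z(2)] z(3) unfolding enables_def by blast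
  then have "n = g" using z(4) by simp
  then show ?thesis using z by blast
qed

lemma party: "R x0 y \<Longrightarrow> y a = {m} \<Longrightarrow> a \<in> parties N m"
  using leave by blast


lemma path:
  assumes h: "R x0 v" "R v y" "v a = {p}" and hq: "y a = {q}"
  shows "(p, q) \<in> (graph N)\<^sup>*"
proof -
  have "\<forall>q. y a = {q} \<longrightarrow> (p, q) \<in> (graph N)\<^sup>*"
    using h(2) unfolding reach_def
  proof (induction rule: rtranclp_induct)
    case base
    then show ?case using h(3) by simp
  next
    case (step y z)
    then obtain n r where st: "step N y n r z" unfolding step_rel_def by blast
    note D = step_D[OF st]
    have nA: "n \<in> atoms N" using D by (simp add: enables_def)
    have ry: "R x0 y" using h(1) step.hyps(1) unfolding reach_def by simp
    show ?case
    proof (intro allI impI)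
      fix q assume zq: "z a = {q}"
      show "(p, q) \<in> (graph N)\<^sup>*"
      proof (cases "a \<in> parties N n")
        case True
        then have "y a = {n}" using enabled_single[OF ry] D by blast
        then have pn: "(p, n) \<in> (graph N)\<^sup>*" using step.IH by blast
        have "q \<in> succ N n a r" using zq D True by simp
        then have "(n, q) \<in> graph N" using graphI[OF nA True] D by blast
        then show ?thesis using pn by simp
      next
        case False
        then show ?thesis using zq D step.IH by simp
      qed
    qed
  qed
  then show ?thesis using hq by blast
qed

lemma arrive:
  assumes h: "R x0 v" "R v y" and he: "y b = {e}"
  shows "v b = {e} \<or>
  (\<exists>y1 g r. R v y1 \<and> enables N y1 g \<and> r \<in> outcomes N g \<and> b \<in> parties N g \<and> y1 b = {g} \<and> succ N g b r = {e})"
proof -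
  have "\<forall>e. y b = {e} \<longrightarrow> v b = {e} \<or>
  (\<exists>y1 g r. R v y1 \<and> enables N y1 g \<and> r \<in> outcomes N g \<and> b \<in> parties N g \<and> y1 b = {g} \<and> succ N g b r = {e})"
    using h(2) unfolding reach_def
  proof (induction rule: rtranclp_induct)
    case base
    then show ?case by simp
  next
    case (step y z)
    then obtain n r where st: "step N y n r z" unfolding step_rel_def by blast
    note D = step_D[OF st]
    have ry: "R x0 y" using h(1) step.hyps(1) unfolding reach_def by simp
    show ?case
    proof (intro allI impI)
      fix e assume ze: "z b = {e}"
      show "v b = {e} \<or> (\<exists>y1 g r. (step_rel N)\<^sup>*\<^sup>* v y1 \<and> enables N y1 g \<and> r \<in> outcomes N g \<and> b \<in> parties N g \<and> y1 b = {g} \<and> succ N g b r = {e})"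
      proof (cases "b \<in> parties N n")
        case True
        then have "y b = {n}" using enabled_single[OF ry] D by blast
        moreover have "succ N n b r = {e}" using ze D True by simp
        moreover have "(step_rel N)\<^sup>*\<^sup>* v y" using step.hyps(1) by simp
        ultimately show ?thesis using D True by blast
      next
        case False
        then show ?thesis using ze D step.IH by simp
      qed
    qed
  qed
  then show ?thesis using he unfolding reach_def by blast
qed

definition RS :: "'n set \<Rightarrow> 'n set" where
  "RS S = {m \<in> atoms N. \<exists>p\<in>S. (p, m) \<in> (graph N)\<^sup>*}"

definition mu :: "('a \<Rightarrow> 'n set) \<Rightarrow> nat" where
  "mu x = (\<Sum>a\<in>agents N. card (RS (x a)))"

lemma RS_fin: "finite (RS S)" unfolding RS_def using fin_atoms by simp

lemma mu_dec: "R x0 x \<Longrightarrow> step N x g r x' \<Longrightarrow> mu x' < mu x"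
proof -
  assume h: "R x0 x" "step N x g r x'"
  note D = step_D[OF h(2)]
  have gA: "g \<in> atoms N" using D by (simp add: enables_def)
  have key: "RS (x' a) \<subset> RS (x a)" if aP: "a \<in> parties N g" for a
  proof -
    have xa: "x a = {g}" using enabled_single[OF h(1)] D aP by blast
    have x'a: "x' a = succ N g a r" using D aP by simp
    have gin: "g \<in> RS (x a)" using xa gA unfolding RS_def by simp
    have sub: "RS (x' a) \<subseteq> RS (x a)"
    proof
      fix m assume "m \<in> RS (x' a)"
      then obtain p where pm: "m \<in> atoms N" "p \<in> succ N g a r" "(p, m) \<in> (graph N)\<^sup>*"
        unfolding RS_def x'a by blast
      have gp: "(g, p) \<in> graph N" using graphI[OF gA aP] D pm(2) by blast
      have "(g, m) \<in> (graph N)\<^sup>*" by (rule converse_rtrancl_into_rtrancl[OF gp pm(3)])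
      then show "m \<in> RS (x a)" unfolding RS_def xa using pm(1) by blast
    qed
    have "g \<notin> RS (x' a)"
    proof
      assume "g \<in> RS (x' a)"
      then obtain p where p: "p \<in> succ N g a r" "(p, g) \<in> (graph N)\<^sup>*"
        unfolding RS_def x'a by blast
      have "(g, p) \<in> graph N" using graphI[OF gA aP] D p(1) by blast
      then have "(g, g) \<in> (graph N)\<^sup>+" using p(2) by (rule rtrancl_into_trancl2)
      then show False using no_self[of g] by simp
    qed
    then show ?thesis using sub gin by blast
  qed
  show ?thesis unfolding mu_def
  proof (rule sum_strict_mono_ex1)
    show "finite (agents N)" by (rule fin_agents)
    show "\<forall>a\<in>agents N. card (RS (x' a)) \<le> card (RS (x a))"
    proof
      fix a assume "a \<in> agents N"
      show "card (RS (x' a)) \<le> card (RS (x a))"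
      proof (cases "a \<in> parties N g")
        case True
        have "card (RS (x' a)) < card (RS (x a))" by (rule psubset_card_mono[OF RS_fin key[OF True]])
        then show ?thesis by simp
      next
        case False
        then show ?thesis using D by simp
      qed
    qed
    obtain a where aP: "a \<in> parties N g" using parties_ne[OF gA] by blast
    have "a \<in> agents N" using aP parties_sub[OF gA] by blast
    moreover have "card (RS (x' a)) < card (RS (x a))" by (rule psubset_card_mono[OF RS_fin key[OF aP]])
    ultimately show "\<exists>a\<in>agents N. card (RS (x' a)) < card (RS (x a))" by blast
  qed
qed

lemma only_f: "f \<in> atoms N \<Longrightarrow> \<exists>w. R x0 w \<and> enables N w f \<and> (\<forall>g. enables N w g \<longrightarrow> g = f)"
proof -
  assume fA: "f \<in> atoms N"
  obtain w0 where "R x0 w0 \<and> enables N w0 f" using soundN fA unfolding sound_def by blast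
  then obtain w where w: "R x0 w \<and> enables N w f" and wmin: "\<forall>w'. R x0 w' \<and> enables N w' f \<longrightarrow> mu w \<le> mu w'"
    using ex_has_least_nat[of "\<lambda>w. R x0 w \<and> enables N w f" w0 mu] by blast
  have "\<forall>g. enables N w g \<longrightarrow> g = f"
  proof (intro allI impI)
    fix g assume ge: "enables N w g"
    show "g = f"
    proof (rule ccontr)
      assume ne: "g \<noteq> f"
      have gA: "g \<in> atoms N" using ge by (simp add: enables_def)
      obtain r where r: "r \<in> outcomes N g" using outcomes_ne[OF gA] by blast
      define w' where "w' = (\<lambda>a. if a \<in> parties N g then succ N g a r else w a)"
      have st: "step N w g r w'" unfolding step_def w'_def using ge r by simp
      have rw': "R x0 w'" using w reach_step[OF st] reach_trans by blast
      have "enables N w' f"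
        unfolding enables_def
      proof (intro conjI ballI)
        show "f \<in> atoms N" by (rule fA)
        fix b assume bP: "b \<in> parties N f"
        have "b \<notin> parties N g"
        proof
          assume "b \<in> parties N g"
          then have "w b = {g}" using enabled_single w ge by blast
          moreover have "w b = {f}" using enabled_single w bP by blast
          ultimately show False using ne by simp
        qed
        then show "f \<in> w' b" using w bP unfolding w'_def enables_def by simp
      qed
      then have "mu w \<le> mu w'" using wmin rw' by blast
      moreover have "mu w' < mu w" using mu_dec[OF _ st] w by blast
      ultimately show False by simp
    qed
  qed
  then show ?thesis using w by blast
qed


lemma causal:
  assumes w: "R x0 w" and only: "\<forall>g. enables N w g \<longrightarrow> g = f"
    and st: "step N w f s v" and rv: "R v y" and en: "enables N y g"
  shows "(f, g) \<in> (graph N)\<^sup>+"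
proof -
  define I where "I y \<longleftrightarrow> (\<forall>a. (a \<notin> parties N f \<and> y a = w a) \<or> (\<exists>q. y a = {q} \<and> (f, q) \<in> (graph N)\<^sup>+) \<or> y a = {})" for y
  note Df = step_D[OF st]
  have fA: "f \<in> atoms N" using Df by (simp add: enables_def)
  have enI: "(f, g') \<in> (graph N)\<^sup>+" if Iy: "I y'" and eg: "enables N y' g'" for y' g'
  proof (cases "\<exists>b\<in>parties N g'. \<not> (b \<notin> parties N f \<and> y' b = w b)")
    case True
    then obtain b where b: "b \<in> parties N g'" "\<not> (b \<notin> parties N f \<and> y' b = w b)" by blast
    have gy: "g' \<in> y' b" using eg b(1) unfolding enables_def by blast
    from Iy b(2) have "(\<exists>q. y' b = {q} \<and> (f, q) \<in> (graph N)\<^sup>+) \<or> y' b = {}" unfolding I_def by blast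
    then show ?thesis
    proof
      assume "\<exists>q. y' b = {q} \<and> (f, q) \<in> (graph N)\<^sup>+"
      then obtain q where q: "y' b = {q}" "(f, q) \<in> (graph N)\<^sup>+" by blast
      then have "g' = q" using gy by simp
      then show ?thesis using q(2) by simp
    next
      assume "y' b = {}"
      then show ?thesis using gy by simp
    qed
  next
    case False
    then have "enables N w g'" using eg unfolding enables_def by auto
    then have "g' = f" using only by blast
    moreover have gA: "g' \<in> atoms N" using eg by (simp add: enables_def)
    obtain b where b: "b \<in> parties N g'" using parties_ne[OF gA] by blast
    then have "b \<notin> parties N f" using False by blast
    then show ?thesis using b \<open>g' = f\<close> by simp
  qed
  have Iv: "I v" unfolding I_def
  proof
    fix a
    show "(a \<notin> parties N f \<and> v a = w a) \<or> (\<exists>q. v a = {q} \<and> (f, q) \<in> (graph N)\<^sup>+) \<or> v a = {}"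
    proof (cases "a \<in> parties N f")
      case True
      then have "v a = succ N f a s" using Df by simp
      then show ?thesis using succ_cases[OF fA True, of s] Df by auto
    next
      case False
      then show ?thesis using Df by simp
    qed
  qed
  have "I y" using rv unfolding reach_def
  proof (induction rule: rtranclp_induct)
    case base
    then show ?case by (rule Iv)
  next
    case (step y z)
    then obtain n r where st2: "step N y n r z" unfolding step_rel_def by blast
    note D = step_D[OF st2]
    have nA: "n \<in> atoms N" using D by (simp add: enables_def)
    have fn: "(f, n) \<in> (graph N)\<^sup>+" using D by (intro enI[OF step.IH]) simp
    show ?case unfolding I_def
    proof
      fix a
      show "(a \<notin> parties N f \<and> z a = w a) \<or> (\<exists>q. z a = {q} \<and> (f, q) \<in> (graph N)\<^sup>+) \<or> z a = {}"
      proof (cases "a \<in> parties N n")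
        case True
        then have za: "z a = succ N n a r" using D by simp
        show ?thesis
        proof (cases "succ N n a r = {}")
          case True then show ?thesis using za by simp
        next
          case False
          then obtain q where "succ N n a r = {q}" "(n, q) \<in> graph N"
            using succ_cases[OF nA \<open>a \<in> parties N n\<close>, of r] D by blast
          moreover have "(f, q) \<in> (graph N)\<^sup>+" using fn calculation(2) by (rule trancl_into_trancl)
          ultimately show ?thesis using za by blast
        qed
      next
        case False
        then have "z a = y a" using D by simp
        then show ?thesis using step.IH unfolding I_def by metis
      qed
    qed
  qed
  then show ?thesis using en by (rule enI)
qed

lemma third_cond: "(\<exists>(n1, a1, r1)\<in>Tset N. n1 \<noteq> n \<and> n' \<in> succ N n1 a1 r1) \<longrightarrow>
         (\<exists>(n1, a1, r1)\<in>Tset N. n1 \<noteq> n \<and> succ N n1 a1 r1 = {n'})"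
proof
  assume "\<exists>(n1, a1, r1)\<in>Tset N. n1 \<noteq> n \<and> n' \<in> succ N n1 a1 r1"
  then obtain n1 a1 r1 where t: "(n1, a1, r1) \<in> Tset N" "n1 \<noteq> n" "n' \<in> succ N n1 a1 r1" by blast
  have h: "n1 \<in> atoms N" "a1 \<in> parties N n1" "r1 \<in> outcomes N n1" using t(1) unfolding Tset_def by auto
  have "n1 \<noteq> fin N" using succ_empty[OF h] t(3) by blast
  then obtain q where "succ N n1 a1 r1 = {q}" using succ_det[OF h] by blast
  then have "succ N n1 a1 r1 = {n'}" using t(3) by simp
  then show "\<exists>(n1, a1, r1)\<in>Tset N. n1 \<noteq> n \<and> succ N n1 a1 r1 = {n'}" using t(1,2) by blast
qed


definition multi :: "'n \<Rightarrow> bool" where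
  "multi g \<longleftrightarrow> (\<exists>r1\<in>outcomes N g. \<exists>r2\<in>outcomes N g. r1 \<noteq> r2)"

lemma card_single: "g \<in> atoms N \<Longrightarrow> \<not> multi g \<Longrightarrow> card (outcomes N g) \<le> 1"
  using card_le_Suc0_iff_eq[OF outcomes_fin[of g]] unfolding multi_def by auto

lemma wf_graph: "wf (graph N)" using finite_acyclic_wf[OF graph_finite acycN] .

lemma shortcutI: "f \<in> atoms N \<Longrightarrow> s \<in> outcomes N f \<Longrightarrow> e \<in> atoms N \<Longrightarrow> (f, e) \<in> graph N \<Longrightarrow>
   \<not> multi e \<Longrightarrow> parties N e \<subseteq> parties N f \<Longrightarrow> (\<forall>b\<in>parties N e. succ N f b s = {e}) \<Longrightarrow>
   dshortcut_applicable N"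
proof -
  assume h: "f \<in> atoms N" "s \<in> outcomes N f" "e \<in> atoms N" "(f, e) \<in> graph N" "\<not> multi e"
    "parties N e \<subseteq> parties N f" "\<forall>b\<in>parties N e. succ N f b s = {e}"
  have "f \<noteq> e" using h(4) no_self[of f] by auto
  moreover have "uncond_enables N f s e" using h(6,7) unfolding uncond_enables_def by blast
  moreover have "card (outcomes N e) \<le> 1" using card_single h(3,5) by blast
  ultimately show ?thesis unfolding dshortcut_applicable_def using h(1,2,3) third_cond[of f e] by blast
qed

lemma transfer:
  assumes irr: "\<not> dshortcut_applicable N"
    and w: "R x0 w" and only: "\<forall>g. enables N w g \<longrightarrow> g = f"
    and fen: "enables N w f"
    and maxf: "\<forall>g\<in>atoms N. (f, g) \<in> (graph N)\<^sup>+ \<longrightarrow> \<not> multi g"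
    and s1: "s1 \<in> outcomes N f" and s2: "s2 \<in> outcomes N f"
    and v1: "v1 = (\<lambda>a. if a \<in> parties N f then succ N f a s1 else w a)"
    and v2: "v2 = (\<lambda>a. if a \<in> parties N f then succ N f a s2 else w a)"
  shows "\<forall>a. (\<exists>y. R v1 y \<and> y a = {e}) \<longrightarrow> (\<exists>y. R v2 y \<and> y a = {e})"
  using wf_graph
proof (induction e rule: wf_induct_rule)
  case (less e)
  have st1: "step N w f s1 v1" unfolding step_def v1 using fen s1 by simp
  have st2: "step N w f s2 v2" unfolding step_def v2 using fen s2 by simp
  have rv1: "R x0 v1" using reach_trans[OF w reach_step[OF st1]] .
  have rv2: "R x0 v2" using reach_trans[OF w reach_step[OF st2]] .
  have fA: "f \<in> atoms N" using fen by (simp add: enables_def)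
  show ?case
  proof (intro allI impI)
    fix a assume "\<exists>y. R v1 y \<and> y a = {e}"
    then obtain y where y: "R v1 y" "y a = {e}" by blast
    have ry: "R x0 y" using reach_trans[OF rv1 y(1)] .
    have C: "\<exists>y. R v2 y \<and> y a = {e}" if "\<exists>b\<in>parties N e. \<exists>y. R v2 y \<and> y b = {e}"
    proof -
      from that obtain b y' where b: "b \<in> parties N e" "R v2 y'" "y' b = {e}" by blast
      have ry': "R x0 y'" using reach_trans[OF rv2 b(2)] .
      obtain z r z' where z: "R y' z" "step N z e r z'" "b \<in> parties N e" "z b = {e}"
        using leave[OF ry' b(3)] by blast
      have rz: "R x0 z" using reach_trans[OF ry' z(1)] .
      have "a \<in> parties N e" using party[OF ry y(2)] .
      then have "z a = {e}" using enabled_single[OF rz] step_D[OF z(2)] by blast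
      moreover have "R v2 z" using reach_trans[OF b(2) z(1)] .
      ultimately show ?thesis by blast
    qed
    show "\<exists>y. R v2 y \<and> y a = {e}"
    proof (rule ccontr)
      assume nv: "\<not> (\<exists>y. R v2 y \<and> y a = {e})"
      then have H: "\<forall>b\<in>parties N e. \<not> (\<exists>y. R v2 y \<and> y b = {e})" using C by blast
      obtain z r z' where z: "R y z" "step N z e r z'" "a \<in> parties N e" "z a = {e}"
        using leave[OF ry y(2)] by blast
      have ez: "enables N z e" using step_D[OF z(2)] by blast
      have eA: "e \<in> atoms N" using ez by (simp add: enables_def)
      have rz: "R x0 z" using reach_trans[OF ry z(1)] .
      have rv1z: "R v1 z" using reach_trans[OF y(1) z(1)] .
      have allf: "b \<in> parties N f \<and> succ N f b s1 = {e}" if bP: "b \<in> parties N e" for b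
      proof -
        have zb: "z b = {e}" using enabled_single[OF rz ez bP] .
        from arrive[OF rv1 rv1z zb] show ?thesis
        proof
          assume v1b: "v1 b = {e}"
          show ?thesis
          proof (cases "b \<in> parties N f")
            case True
            then show ?thesis using v1b unfolding v1 by simp
          next
            case False
            then have "v2 b = {e}" using v1b unfolding v1 v2 by simp
            moreover have "R v2 v2" unfolding reach_def by simp
            ultimately show ?thesis using H bP by blast
          qed
        next
          assume "\<exists>y1 g r. R v1 y1 \<and> enables N y1 g \<and> r \<in> outcomes N g \<and> b \<in> parties N g \<and> y1 b = {g} \<and> succ N g b r = {e}"
          then obtain y1 g rr where g: "R v1 y1" "enables N y1 g" "rr \<in> outcomes N g" "b \<in> parties N g"
            "y1 b = {g}" "succ N g b rr = {e}" by blast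
          have gA: "g \<in> atoms N" using g(2) by (simp add: enables_def)
          have "(f, g) \<in> (graph N)\<^sup>+" using causal[OF w only st1 g(1) g(2)] .
          then have nm: "\<not> multi g" using maxf gA by blast
          have ge: "(g, e) \<in> graph N" using graphI[OF gA g(4) g(3)] g(6) by simp
          have "\<exists>y. R v2 y \<and> y b = {g}" using less.IH[OF ge] g(1,5) by blast
          then obtain y2 where y2: "R v2 y2" "y2 b = {g}" by blast
          have ry2: "R x0 y2" using reach_trans[OF rv2 y2(1)] .
          obtain z2 r2 z2' where z2: "R y2 z2" "step N z2 g r2 z2'" "b \<in> parties N g" "z2 b = {g}"
            using leave[OF ry2 y2(2)] by blast
          note D2 = step_D[OF z2(2)]
          have "r2 = rr" using nm D2 g(3) unfolding multi_def by blast
          then have "z2' b = {e}" using D2 g(4,6) by simp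
          moreover have "R v2 z2'" using reach_trans[OF y2(1) reach_trans[OF z2(1) reach_step[OF z2(2)]]] .
          ultimately show ?thesis using H bP by blast
        qed
      qed
      obtain b0 where b0: "b0 \<in> parties N e" using parties_ne[OF eA] by blast
      have fe: "(f, e) \<in> graph N" using allf[OF b0] graphI[OF fA _ s1, of b0 e] by simp
      have "\<not> multi e" using maxf eA fe by blast
      moreover have "parties N e \<subseteq> parties N f" using allf by blast
      moreover have "\<forall>b\<in>parties N e. succ N f b s1 = {e}" using allf by blast
      ultimately have "dshortcut_applicable N" using shortcutI[OF fA s1 eA fe] by blast
      then show False using irr by blast
    qed
  qed
qed


lemma upd_step: "enables N x n \<Longrightarrow> r \<in> outcomes N n \<Longrightarrow>
   step N x n r (\<lambda>a. if a \<in> parties N n then succ N n a r else x a)"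
  unfolding step_def by simp

lemma init_enabled: "enables N x0 (init N)"
  unfolding enables_def init_marking_def using init_atom init_parties parties_sub[OF init_atom] by auto

lemma no_two:
  assumes irr: "irreducible N" and ne: "init N \<noteq> fin N"
  shows False
proof -
  have nomerge: "\<not> merge_applicable N" and nosc: "\<not> dshortcut_applicable N"
    using irr unfolding irreducible_def by auto
  show False
  proof (cases "{g \<in> atoms N. multi g} = {}")
    case False
    then obtain g0 where g0: "g0 \<in> {g \<in> atoms N. multi g}" by blast
    have wfc: "wf (((graph N)\<inverse>)\<^sup>+)"
      using wf_trancl[OF finite_acyclic_wf_converse[OF graph_finite acycN]] .
    obtain f where f: "f \<in> {g \<in> atoms N. multi g}"
      and fm: "\<And>y. (y, f) \<in> ((graph N)\<inverse>)\<^sup>+ \<Longrightarrow> y \<notin> {g \<in> atoms N. multi g}"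
      using wfE_min[OF wfc g0] by blast
    have fA: "f \<in> atoms N" and mf: "multi f" using f by auto
    have maxf: "\<forall>g\<in>atoms N. (f, g) \<in> (graph N)\<^sup>+ \<longrightarrow> \<not> multi g"
    proof (intro ballI impI)
      fix g assume "g \<in> atoms N" "(f, g) \<in> (graph N)\<^sup>+"
      then have "(g, f) \<in> ((graph N)\<inverse>)\<^sup>+" by (simp add: trancl_converse)
      then show "\<not> multi g" using fm \<open>g \<in> atoms N\<close> by blast
    qed
    obtain r1 r2 where r: "r1 \<in> outcomes N f" "r2 \<in> outcomes N f" "r1 \<noteq> r2" using mf unfolding multi_def by blast
    then obtain d where d: "d \<in> parties N f" "succ N f d r1 \<noteq> succ N f d r2"
      using nomerge fA unfolding merge_applicable_def by blast
    have fnf: "f \<noteq> fin N" using d succ_empty[OF fA d(1) r(1)] succ_empty[OF fA d(1) r(2)] by auto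
    obtain e1 where e1: "succ N f d r1 = {e1}" using succ_det[OF fA d(1) r(1) fnf] by blast
    obtain e2 where e2: "succ N f d r2 = {e2}" using succ_det[OF fA d(1) r(2) fnf] by blast
    have e12: "e1 \<noteq> e2" using d(2) e1 e2 by simp
    obtain w where w: "R x0 w" "enables N w f" "\<forall>g. enables N w g \<longrightarrow> g = f" using only_f[OF fA] by blast
    define v1 where "v1 = (\<lambda>a. if a \<in> parties N f then succ N f a r1 else w a)"
    define v2 where "v2 = (\<lambda>a. if a \<in> parties N f then succ N f a r2 else w a)"
    have rv1: "R x0 v1" using reach_trans[OF w(1) reach_step[OF upd_step[OF w(2) r(1)]]] unfolding v1_def .
    have rv2: "R x0 v2" using reach_trans[OF w(1) reach_step[OF upd_step[OF w(2) r(2)]]] unfolding v2_def .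
    have v1d: "v1 d = {e1}" using d(1) e1 unfolding v1_def by simp
    have v2d: "v2 d = {e2}" using d(1) e2 unfolding v2_def by simp
    have T12: "\<forall>a. (\<exists>y. R v1 y \<and> y a = {e1}) \<longrightarrow> (\<exists>y. R v2 y \<and> y a = {e1})"
      using transfer[OF nosc w(1) w(3) w(2) maxf r(1) r(2) v1_def v2_def] .
    have T21: "\<forall>a. (\<exists>y. R v2 y \<and> y a = {e2}) \<longrightarrow> (\<exists>y. R v1 y \<and> y a = {e2})"
      using transfer[OF nosc w(1) w(3) w(2) maxf r(2) r(1) v2_def v1_def] .
    have "R v1 v1" "R v2 v2" unfolding reach_def by simp_all
    then obtain y1 y2 where y: "R v2 y1" "y1 d = {e1}" "R v1 y2" "y2 d = {e2}"
      using T12 T21 v1d v2d by blast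
    have p1: "(e2, e1) \<in> (graph N)\<^sup>*" using path[OF rv2 y(1) v2d y(2)] .
    have p2: "(e1, e2) \<in> (graph N)\<^sup>*" using path[OF rv1 y(3) v1d y(4)] .
    have "(e1, e2) \<in> (graph N)\<^sup>+" using p2 e12 by (simp add: rtrancl_eq_or_trancl)
    then have "(e1, e1) \<in> (graph N)\<^sup>+" using p1 by (rule trancl_rtrancl_trancl)
    then show False using no_self[of e1] by simp
  next
    case True
    then have nm: "\<And>g. g \<in> atoms N \<Longrightarrow> \<not> multi g" by blast
    obtain r0 where r0: "r0 \<in> outcomes N (init N)" using outcomes_ne[OF init_atom] by blast
    define v where "v = (\<lambda>a. if a \<in> parties N (init N) then succ N (init N) a r0 else x0 a)"
    have st: "step N x0 (init N) r0 v" unfolding v_def by (rule upd_step[OF init_enabled r0])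
    have rv: "R x0 v" using reach_step[OF st] .
    obtain a where aA: "a \<in> agents N" using agents_ne by blast
    then have aP: "a \<in> parties N (init N)" using init_parties by blast
    have "v a \<noteq> {}" using succ_empty[OF init_atom aP r0] ne aP unfolding v_def by simp
    then have "v \<noteq> fin_marking" unfolding fin_marking_def by metis
    moreover have "(step_rel N)\<^sup>*\<^sup>* v fin_marking" using soundN rv unfolding sound_def reach_def by blast
    ultimately obtain v'' where "step_rel N v v''" by (metis converse_rtranclpE)
    then obtain e r' where "step N v e r' v''" unfolding step_rel_def by blast
    then have ev: "enables N v e" using step_D by blast
    have eA: "e \<in> atoms N" using ev by (simp add: enables_def)
    have allf: "b \<in> parties N (init N) \<and> succ N (init N) b r0 = {e}" if bP: "b \<in> parties N e" for b
    proof -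
      have bI: "b \<in> parties N (init N)" using bP parties_sub[OF eA] init_parties by blast
      have "e \<in> v b" using ev bP unfolding enables_def by blast
      then have "e \<in> succ N (init N) b r0" using bI unfolding v_def by simp
      moreover obtain q where "succ N (init N) b r0 = {q}" using succ_det[OF init_atom bI r0 ne] by blast
      ultimately show ?thesis using bI by simp
    qed
    obtain b0 where b0: "b0 \<in> parties N e" using parties_ne[OF eA] by blast
    have fe: "(init N, e) \<in> graph N" using allf[OF b0] graphI[OF init_atom _ r0, of b0 e] by simp
    have "dshortcut_applicable N"
      using shortcutI[OF init_atom r0 eA fe nm[OF eA]] allf by blast
    then show False using nosc by blast
  qed
qed

lemma main_concl:
  assumes irr: "irreducible N"
  shows "(\<forall>n\<in>atoms N. agents N \<subseteq> parties N n) \<and>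
         (\<forall>n\<in>atoms N. n \<noteq> fin N \<longrightarrow>
            (\<forall>r\<in>outcomes N n. \<exists>n'\<in>atoms N. \<forall>a\<in>agents N. succ N n a r = {n'}))"
proof -
  have eq: "init N = fin N" using no_two[OF irr] by blast
  have enx0: "enables N x0 n \<Longrightarrow> n = init N" for n
  proof -
    assume en: "enables N x0 n"
    then have nA: "n \<in> atoms N" by (simp add: enables_def)
    obtain b where "b \<in> parties N n" using parties_ne[OF nA] by blast
    then have "n \<in> x0 b" using en unfolding enables_def by blast
    then show ?thesis unfolding init_marking_def by (auto split: if_splits)
  qed
  have nofin: "\<not> enables N fin_marking n" for n
  proof
    assume en: "enables N fin_marking n"
    then have nA: "n \<in> atoms N" by (simp add: enables_def)
    obtain b where "b \<in> parties N n" using parties_ne[OF nA] by blast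
    then show False using en unfolding enables_def fin_marking_def by blast
  qed
  have reachc: "x = x0 \<or> x = fin_marking" if "R x0 x" for x
    using that unfolding reach_def
  proof (induction rule: rtranclp_induct)
    case base then show ?case by simp
  next
    case (step y z)
    then obtain n r where st: "step N y n r z" unfolding step_rel_def by blast
    note D = step_D[OF st]
    have "y = x0" using step.IH D nofin by blast
    then have nI: "n = init N" using enx0 D by blast
    have "z = fin_marking"
    proof
      fix a
      show "z a = fin_marking a"
      proof (cases "a \<in> parties N n")
        case True
        then show ?thesis using D succ_empty[OF init_atom, of a r] nI eq by (simp add: fin_marking_def)
      next
        case False
        then have "a \<notin> agents N" using fin_parties nI eq by auto
        then show ?thesis using D False \<open>y = x0\<close> by (simp add: fin_marking_def init_marking_def)
      qed
    qed
    then show ?case by simp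
  qed
  have "\<forall>n\<in>atoms N. n = init N"
  proof
    fix n assume "n \<in> atoms N"
    then obtain x where "R x0 x" "enables N x n" using soundN unfolding sound_def by blast
    then show "n = init N" using reachc nofin enx0 by blast
  qed
  then show ?thesis using eq fin_parties by auto
qed

end

theorem lemma2:
  fixes \<N> :: "('a, 's, 'n, 'r) negotiation"
  assumes "SDAN \<N>" and "irreducible \<N>"
  shows "(\<forall>n\<in>atoms \<N>. agents \<N> \<subseteq> parties \<N> n) \<and>
         (\<forall>n\<in>atoms \<N>. n \<noteq> fin \<N> \<longrightarrow>
            (\<forall>r\<in>outcomes \<N> n. \<exists>n'\<in>atoms \<N>. \<forall>a\<in>agents \<N>. succ \<N> n a r = {n'}))"
  using main_concl[OF assms(1) assms(2)] .

end
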